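(* Let $M$ be a proper metric space and $\chi_1,\dots,\chi_n$ a coarsely transverse collection of switch functions on $M$, and put $X_i=\mathrm{supp}(\chi_i)$. Then $\mathbf 1\wedge\chi_1\wedge\dots\wedge\chi_n$ is a coarse cochain on $M$, and $$[\mathbf 1\wedge\chi_1\wedge\dots\wedge\chi_n]=[\mathbf 1\wedge X_1\wedge\dots\wedge X_n]\in HX^n(M).$$
   Context: Borel sets are identified with their indicator functions; $\mathbf 1$ is the constant function $1$. For $Y\subseteq M$, $Y_R=\{x:d(x,Y)\le R\}$. A coarsely transverse collection of switch functions is a collection of bounded Borel functions $\chi_1,\dots,\chi_n:M\to\mathbb{C}$ such that the sets $\mathrm{supp}(\chi_i),\mathrm{supp}(\mathbf 1-\chi_i)$, $i=1,\dots,n$, are coarsely transverse, i.e. the intersection of their $R$-thickenings is bounded for every $R$. Coarse cohomology: $M^{n+1}$ has the max metric, $\Delta_R$ is the $R$-thickening of the multi-diagonal; a coarse $n$-cochain is a locally bounded Borel $\theta:M^{n+1}\to\mathbb{C}$ with $\mathrm{supp}(\theta)\cap\Delta_R$ bounded for all $R$; $\delta\theta=\sum_{i=0}^{n+1}(-1)^i\pi_i^*\theta$ ($\pi_i$ omits coordinate $i$); $HX^n(M)$ is the cohomology. $f_0\wedge\dots\wedge f_n=\sum_{\sigma\in S_{n+1}}\mathrm{sgn}(\sigma)f_{\sigma_0}\otimes\dots\otimes f_{\sigma_n}$. *)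

theory Defs
  imports "HOL-Analysis.Analysis" "HOL-Combinatorics.Permutations"
begin

definition supp :: "('a \<Rightarrow> complex) \<Rightarrow> 'a set" where
  "supp f = {x. f x \<noteq> 0}"

text \<open>R-thickening Y_R = {x. d(x,Y) \<le> R}, with d(x,{}) = \<infinity> (so the thickening of {} is empty).\<close>
definition thickening :: "'a::metric_space set \<Rightarrow> real \<Rightarrow> 'a set" where
  "thickening Y R = {x. Y \<noteq> {} \<and> infdist x Y \<le> R}"

definition coarsely_transverse_switch :: "nat \<Rightarrow> (nat \<Rightarrow> 'a::metric_space \<Rightarrow> complex) \<Rightarrow> bool" where
  "coarsely_transverse_switch n chi \<longleftrightarrow>
     (\<forall>i\<in>{1..n}. chi i \<in> borel_measurable borel \<and> bounded (range (chi i))) \<and>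
     (\<forall>R. bounded (\<Inter>i\<in>{1..n}. thickening (supp (chi i)) R
                                   \<inter> thickening (supp (\<lambda>x. 1 - chi i x)) R))"

definition tuples :: "nat \<Rightarrow> (nat \<Rightarrow> 'a) set" where
  "tuples n = {..n} \<rightarrow>\<^sub>E UNIV"

definition dist_max :: "nat \<Rightarrow> (nat \<Rightarrow> 'a::metric_space) \<Rightarrow> (nat \<Rightarrow> 'a) \<Rightarrow> real" where
  "dist_max n x y = Max ((\<lambda>i. dist (x i) (y i)) ` {..n})"

definition bounded_tuples :: "nat \<Rightarrow> (nat \<Rightarrow> 'a::metric_space) set \<Rightarrow> bool" where
  "bounded_tuples n S \<longleftrightarrow> (\<exists>c r. \<forall>x\<in>S. dist_max n x c \<le> r)"

definition diag_thick :: "nat \<Rightarrow> real \<Rightarrow> (nat \<Rightarrow> 'a::metric_space) set" where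
  "diag_thick n R = {x \<in> tuples n. \<exists>p. dist_max n x (\<lambda>_. p) \<le> R}"

definition locally_bounded_on_tuples :: "nat \<Rightarrow> ((nat \<Rightarrow> 'a::metric_space) \<Rightarrow> complex) \<Rightarrow> bool" where
  "locally_bounded_on_tuples n \<theta> \<longleftrightarrow>
     (\<forall>x\<in>tuples n. \<exists>e>0. bounded (\<theta> ` {y \<in> tuples n. dist_max n x y < e}))"

definition coarse_cochain :: "nat \<Rightarrow> ((nat \<Rightarrow> 'a::metric_space) \<Rightarrow> complex) \<Rightarrow> bool" where
  "coarse_cochain n \<theta> \<longleftrightarrow>
     \<theta> \<in> borel_measurable (PiM {..n} (\<lambda>_. borel)) \<and>
     locally_bounded_on_tuples n \<theta> \<and>
     (\<forall>R. bounded_tuples n ({x \<in> tuples n. \<theta> x \<noteq> 0} \<inter> diag_thick n R))"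

definition omit_coord :: "nat \<Rightarrow> nat \<Rightarrow> (nat \<Rightarrow> 'a) \<Rightarrow> (nat \<Rightarrow> 'a)" where
  "omit_coord n i x = restrict (\<lambda>j. if j < i then x j else x (Suc j)) {..n}"

definition coboundary :: "nat \<Rightarrow> ((nat \<Rightarrow> 'a) \<Rightarrow> complex) \<Rightarrow> (nat \<Rightarrow> 'a) \<Rightarrow> complex" where
  "coboundary n \<theta> x = (\<Sum>i\<le>Suc n. (-1) ^ i * \<theta> (omit_coord n i x))"

definition coarse_cocycle :: "nat \<Rightarrow> ((nat \<Rightarrow> 'a::metric_space) \<Rightarrow> complex) \<Rightarrow> bool" where
  "coarse_cocycle n \<theta> \<longleftrightarrow> coarse_cochain n \<theta> \<and> (\<forall>x\<in>tuples (Suc n). coboundary n \<theta> x = 0)"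

text \<open>Equality of classes in HX^n(M): the difference of two cocycles is the coboundary
  of a coarse (n-1)-cochain (for n = 0: the cocycles agree).\<close>
definition same_class :: "nat \<Rightarrow> ((nat \<Rightarrow> 'a::metric_space) \<Rightarrow> complex) \<Rightarrow> ((nat \<Rightarrow> 'a) \<Rightarrow> complex) \<Rightarrow> bool" where
  "same_class n \<theta> \<theta>' \<longleftrightarrow> coarse_cocycle n \<theta> \<and> coarse_cocycle n \<theta>' \<and>
     (if n = 0 then (\<forall>x\<in>tuples 0. \<theta> x = \<theta>' x)
      else (\<exists>\<eta>. coarse_cochain (n - 1) \<eta> \<and>
              (\<forall>x\<in>tuples n. \<theta> x - \<theta>' x = coboundary (n - 1) \<eta> x)))"

definition wedge :: "nat \<Rightarrow> (nat \<Rightarrow> 'a \<Rightarrow> complex) \<Rightarrow> (nat \<Rightarrow> 'a) \<Rightarrow> complex" where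
  "wedge n f x = (\<Sum>\<sigma> | \<sigma> permutes {..n}. of_int (sign \<sigma>) * (\<Prod>i\<le>n. f (\<sigma> i) (x i)))"

definition one_then :: "(nat \<Rightarrow> 'a \<Rightarrow> complex) \<Rightarrow> nat \<Rightarrow> 'a \<Rightarrow> complex" where
  "one_then f i = (if i = 0 then (\<lambda>_. 1) else f i)"

end

theory Submission
  imports Defs "Jordan_Normal_Form.Determinant"
begin


definition shift :: "(nat \<Rightarrow> 'a) \<Rightarrow> nat \<Rightarrow> 'a" where
  "shift x = (\<lambda>k. x (Suc k))"

definition Dp :: "nat \<Rightarrow> (nat \<Rightarrow> 'a \<Rightarrow> complex) \<Rightarrow> (nat \<Rightarrow> 'a) \<Rightarrow> complex" where
  "Dp m a x = (\<Prod>k<m. a k (x (Suc k)) - a k (x k))"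

fun Ec :: "nat \<Rightarrow> (nat \<Rightarrow> 'a \<Rightarrow> complex) \<Rightarrow> (nat \<Rightarrow> 'a \<Rightarrow> complex) \<Rightarrow> (nat \<Rightarrow> 'a) \<Rightarrow> complex" where
  "Ec 0 a b y = 0"
| "Ec (Suc m) a b y = (a 0 (y 0) - b 0 (y 0)) * Dp m (\<lambda>k. a (Suc k)) y
      - (b 0 (y 1) - b 0 (y 0)) * Ec m (\<lambda>k. a (Suc k)) (\<lambda>k. b (Suc k)) (shift y)"

lemma omit0: "omit_coord m 0 x = restrict (shift x) {..m}"
  by (simp add: omit_coord_def shift_def numeral_2_eq_2)

lemma omitS_0: "omit_coord m (Suc i) x 0 = x 0"
  by (simp add: omit_coord_def)

lemma omitS_S: "j \<le> m \<Longrightarrow> omit_coord (Suc m) (Suc i) x (Suc j) = omit_coord m i (shift x) j"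
  by (simp add: omit_coord_def shift_def numeral_2_eq_2)

lemma cob_split: "coboundary m \<theta> x = \<theta> (omit_coord m 0 x) - (\<Sum>i\<le>m. (-1)^i * \<theta> (omit_coord m (Suc i) x))"
  unfolding coboundary_def sum.atMost_Suc_shift by (simp add: sum_negf)

lemma cob_diff: "coboundary m (\<lambda>y. F y - G y) x = coboundary m F x - coboundary m G x"
  unfolding coboundary_def by (simp add: algebra_simps sum_subtractf)

lemma cob_sum: "coboundary m (\<lambda>y. \<Sum>t\<in>S. c t * F t y) x = (\<Sum>t\<in>S. c t * coboundary m (F t) x)"
  unfolding coboundary_def sum_distrib_left by (subst sum.swap) (simp add: mult.left_commute)

lemma Dp_ext: "(\<And>j. j \<le> m \<Longrightarrow> x j = y j) \<Longrightarrow> Dp m a x = Dp m a y"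
  unfolding Dp_def by (intro prod.cong) auto

lemma Dp_Suc: "Dp (Suc m) a x = (a 0 (x 1) - a 0 (x 0)) * Dp m (\<lambda>k. a (Suc k)) (shift x)"
  unfolding Dp_def shift_def prod.lessThan_Suc_shift by simp

lemma G0:
  assumes ext: "\<And>x y. (\<And>j. j \<le> m \<Longrightarrow> x j = y j) \<Longrightarrow> P x = P y"
  shows "coboundary m (\<lambda>y. g (y 0) * P y) x = (g (x 1) - g (x 0)) * P (shift x) + g (x 0) * coboundary m P x"
proof -
  have "P (omit_coord m 0 x) = P (shift x)" by (rule ext) (simp add: omit0)
  then show ?thesis unfolding cob_split
    by (simp add: omit0[symmetric] omitS_0 algebra_simps sum_distrib_left)
       (simp add: omit0 shift_def)
qed

lemma G1:
  assumes ext: "\<And>x y. (\<And>j. j \<le> m \<Longrightarrow> x j = y j) \<Longrightarrow> Q x = Q y"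
  shows "coboundary (Suc m) (\<lambda>y. (b (y 1) - b (y 0)) * Q (shift y)) x
     = - (b (x 1) - b (x 0)) * coboundary m Q (shift x)"
proof -
  have e0: "Q (shift (omit_coord (Suc m) 0 x)) = Q (shift (shift x))"
    by (rule ext) (simp add: omit0 shift_def)
  have e1: "Q (shift (omit_coord (Suc m) (Suc 0) x)) = Q (shift (shift x))"
    by (rule ext) (simp add: omit_coord_def shift_def numeral_2_eq_2)
  have e2: "Q (shift (omit_coord (Suc m) (Suc (Suc j)) x)) = Q (omit_coord m (Suc j) (shift x))" for j
    by (rule ext) (simp add: omitS_S shift_def)
  have e3: "Q (omit_coord m 0 (shift x)) = Q (shift (shift x))"
    by (rule ext) (simp add: omit0 shift_def numeral_2_eq_2)
  have a0: "omit_coord (Suc m) 0 x 0 = x (Suc 0)" "omit_coord (Suc m) 0 x (Suc 0) = x (Suc (Suc 0))"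
    by (simp_all add: omit_coord_def numeral_2_eq_2)
  have a1: "omit_coord (Suc m) (Suc 0) x 0 = x 0" "omit_coord (Suc m) (Suc 0) x (Suc 0) = x (Suc (Suc 0))"
    by (simp_all add: omit_coord_def numeral_2_eq_2)
  have a2: "omit_coord (Suc m) (Suc (Suc j)) x 0 = x 0" "omit_coord (Suc m) (Suc (Suc j)) x (Suc 0) = x (Suc 0)" for j
    by (simp_all add: omit_coord_def numeral_2_eq_2)
  have "coboundary (Suc m) (\<lambda>y. (b (y 1) - b (y 0)) * Q (shift y)) x
     = (b (x 2) - b (x 1)) * Q (shift (shift x)) - ((b (x 2) - b (x 0)) * Q (shift (shift x))
        - (\<Sum>i\<le>m. (-1)^i * ((b (x 1) - b (x 0)) * Q (omit_coord m (Suc i) (shift x)))))"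
    unfolding cob_split[of "Suc m"] sum.atMost_Suc_shift
    by (simp add: e0 e1 e2 a0 a1 a2 numeral_2_eq_2 sum_negf)
  also have "\<dots> = - (b (x 1) - b (x 0)) * coboundary m Q (shift x)"
  proof -
    have "(\<Sum>i\<le>m. (-1)^i * ((b (x 1) - b (x 0)) * Q (omit_coord m (Suc i) (shift x))))
      = (b (x 1) - b (x 0)) * (\<Sum>i\<le>m. (-1)^i * Q (omit_coord m (Suc i) (shift x)))"
      by (simp add: sum_distrib_left mult.left_commute)
    then show ?thesis unfolding cob_split[of m] e3
      by (simp only:) (simp add: algebra_simps)
  qed
  finally show ?thesis .
qed

lemma Dp_cocycle: "coboundary m (Dp m a) x = 0"
proof (induction m arbitrary: a x)
  case 0
  then show ?case by (simp add: coboundary_def Dp_def)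
next
  case (Suc m)
  have "Dp (Suc m) a = (\<lambda>y. (a 0 (y 1) - a 0 (y 0)) * Dp m (\<lambda>k. a (Suc k)) (shift y))"
    by (simp add: Dp_Suc fun_eq_iff)
  then show ?case using G1[of m "Dp m (\<lambda>k. a (Suc k))" "a 0" x, OF Dp_ext] Suc.IH
    by simp
qed

lemma Ec_ext: "(\<And>j. j \<le> m \<Longrightarrow> x j = y j) \<Longrightarrow> Ec (Suc m) a b x = Ec (Suc m) a b y"
proof (induction m arbitrary: a b x y)
  case 0
  then show ?case by (simp add: Dp_def)
next
  case (Suc m)
  have "Ec (Suc m) (\<lambda>k. a (Suc k)) (\<lambda>k. b (Suc k)) (shift x) = Ec (Suc m) (\<lambda>k. a (Suc k)) (\<lambda>k. b (Suc k)) (shift y)"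
    by (rule Suc.IH) (use Suc.prems in \<open>auto simp: shift_def\<close>)
  moreover have "Dp (Suc m) (\<lambda>k. a (Suc k)) x = Dp (Suc m) (\<lambda>k. a (Suc k)) y"
    by (rule Dp_ext) (use Suc.prems in auto)
  ultimately show ?case using Suc.prems[of 0] Suc.prems[of 1] by simp
qed

lemma telescope: "Dp (Suc m) a x - Dp (Suc m) b x = coboundary m (Ec (Suc m) a b) x"
proof (induction m arbitrary: a b x)
  case 0
  show ?case by (simp add: coboundary_def Dp_def omit_coord_def algebra_simps)
next
  case (Suc m)
  let ?a = "\<lambda>k. a (Suc k)" and ?b = "\<lambda>k. b (Suc k)"
  have eq: "Ec (Suc (Suc m)) a b = (\<lambda>y. (\<lambda>y. (a 0 (y 0) - b 0 (y 0)) * Dp (Suc m) ?a y) y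
      - (\<lambda>y. (b 0 (y 1) - b 0 (y 0)) * Ec (Suc m) ?a ?b (shift y)) y)"
    by (simp add: fun_eq_iff)
  have c1: "coboundary (Suc m) (\<lambda>y. (a 0 (y 0) - b 0 (y 0)) * Dp (Suc m) ?a y) x
     = ((a 0 (x 1) - b 0 (x 1)) - (a 0 (x 0) - b 0 (x 0))) * Dp (Suc m) ?a (shift x)"
    using G0[of "Suc m" "Dp (Suc m) ?a" "\<lambda>z. a 0 z - b 0 z" x, OF Dp_ext]
    by (simp add: Dp_cocycle)
  have c2: "coboundary (Suc m) (\<lambda>y. (b 0 (y 1) - b 0 (y 0)) * Ec (Suc m) ?a ?b (shift y)) x
     = - (b 0 (x 1) - b 0 (x 0)) * (Dp (Suc m) ?a (shift x) - Dp (Suc m) ?b (shift x))"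
    using G1[of m "Ec (Suc m) ?a ?b" "b 0" x, OF Ec_ext] Suc.IH[of ?a "shift x" ?b]
    by (simp del: Ec.simps)
  show ?case unfolding eq cob_diff c1 c2 Dp_Suc[of "Suc m"]
    by (simp add: algebra_simps)
qed



lemma LA_entry:
  fixes A :: "complex mat"
  assumes A: "A \<in> carrier_mat (Suc n) (Suc n)" and i: "i < Suc n" and j: "j < Suc n"
  shows "(mat (Suc n) (Suc n) (\<lambda>(i,j). if i = j then 1 else if i = Suc j then -1 else 0) * A) $$ (i,j)
     = (if i = 0 then A $$ (0,j) else A $$ (i,j) - A $$ (i - 1, j))"
proof -
  let ?L = "mat (Suc n) (Suc n) (\<lambda>(i,j). if i = j then (1::complex) else if i = Suc j then -1 else 0)"
  have "(?L * A) $$ (i,j) = (\<Sum>k\<in>{0..<Suc n}. (if i = k then 1 else if i = Suc k then -1 else 0) * A $$ (k,j))"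
    using A i j by (simp add: scalar_prod_def)
  also have "\<dots> = (\<Sum>k\<in>{0..<Suc n}. (if k = i then A $$ (k,j) else 0)) - (\<Sum>k\<in>{0..<Suc n}. (if Suc k = i then A $$ (k,j) else 0))"
    unfolding sum_subtractf[symmetric] by (rule sum.cong) auto
  also have "\<dots> = (if i = 0 then A $$ (0,j) else A $$ (i,j) - A $$ (i - 1, j))"
  proof (cases i)
    case 0
    then show ?thesis using i by simp
  next
    case (Suc i')
    have "(\<Sum>k\<in>{0..<Suc n}. (if Suc k = i then A $$ (k,j) else 0)) = (\<Sum>k\<in>{0..<Suc n}. (if k = i' then A $$ (k,j) else 0))"
      using Suc by (intro sum.cong) auto
    then show ?thesis using Suc i by simp
  qed
  finally show ?thesis .
qed

lemma wedge_Dp: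
  "wedge n (one_then h) x = (\<Sum>\<tau> | \<tau> permutes {..<n}. of_int (sign \<tau>) * Dp n (\<lambda>k. h (Suc (\<tau> k))) x)"
proof -
  define A :: "complex mat" where "A = mat (Suc n) (Suc n) (\<lambda>(i,j). one_then h j (x i))"
  define L :: "complex mat" where "L = mat (Suc n) (Suc n) (\<lambda>(i,j). if i = j then 1 else if i = Suc j then -1 else 0)"
  define B where "B = L * A"
  have Ac: "A \<in> carrier_mat (Suc n) (Suc n)" and Lc: "L \<in> carrier_mat (Suc n) (Suc n)"
    by (simp_all add: A_def L_def)
  have Bc: "B \<in> carrier_mat (Suc n) (Suc n)" using Ac Lc by (simp add: B_def)
  have "wedge n (one_then h) x = Determinant.det A"
    unfolding det_def'[OF Ac] wedge_def atLeast0LessThan lessThan_Suc_atMost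
  proof (rule sum.cong[OF refl])
    fix p assume "p \<in> {p. p permutes {..n}}"
    then have p: "p permutes {..n}" by simp
    show "of_int (sign p) * (\<Prod>i\<le>n. one_then h (p i) (x i)) = of_int (sign p) * (\<Prod>i\<le>n. A $$ (i, p i))"
      using permutes_in_image[OF p] by (auto simp: A_def less_Suc_eq_le intro!: prod.cong)
  qed
  also have "\<dots> = Determinant.det B"
  proof -
    have "diag_mat L = map (\<lambda>_. 1) [0..<Suc n]"
      unfolding diag_mat_def using Lc by (intro map_cong) (auto simp: L_def simp del: upt_Suc)
    then have dL: "diag_mat L = replicate (Suc n) 1"
      by (simp add: map_replicate_const del: upt_Suc)
    have "Determinant.det L = 1"
      by (subst det_lower_triangular[OF _ Lc]) (auto simp: dL, simp add: L_def)
    then show ?thesis unfolding B_def using det_mult[OF Lc Ac] by simp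
  qed
  also have "\<dots> = (\<Sum>i<Suc n. B $$ (i,0) * cofactor B i 0)"
    by (rule laplace_expansion_column[OF Bc]) simp
  also have "\<dots> = Determinant.det (mat_delete B 0 0)"
  proof -
    have B0: "B $$ (i,0) = (if i = 0 then 1 else 0)" if "i < Suc n" for i
      using that unfolding B_def L_def using LA_entry[OF Ac that, of 0] by (simp add: A_def one_then_def)
    show ?thesis
      by (simp add: B0 cofactor_def sum.lessThan_Suc_shift del: sum.lessThan_Suc)
  qed
  also have "\<dots> = (\<Sum>\<tau> | \<tau> permutes {..<n}. of_int (sign \<tau>) * Dp n (\<lambda>k. h (Suc (\<tau> k))) x)"
  proof -
    have Dc: "mat_delete B 0 0 \<in> carrier_mat n n" using mat_delete_carrier[OF Bc] by simp
    have ent: "mat_delete B 0 0 $$ (i,j) = h (Suc j) (x (Suc i)) - h (Suc j) (x i)" if "i < n" "j < n" for i j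
      using that Bc unfolding mat_delete_def B_def L_def
      using LA_entry[OF Ac, of "Suc i" "Suc j"] by (simp add: A_def one_then_def)
    show ?thesis unfolding det_def'[OF Dc] atLeast0LessThan Dp_def
    proof (rule sum.cong[OF refl])
      fix p assume "p \<in> {p. p permutes {..<n}}"
      then have p: "p permutes {..<n}" by simp
      show "of_int (sign p) * (\<Prod>i<n. mat_delete B 0 0 $$ (i, p i)) = of_int (sign p) * (\<Prod>k<n. h (Suc (p k)) (x (Suc k)) - h (Suc (p k)) (x k))"
        using permutes_in_image[OF p] by (auto simp: ent intro!: prod.cong)
    qed
  qed
  finally show ?thesis .
qed




lemma coord_meas:
  assumes "f \<in> borel_measurable borel" "j \<le> N"
  shows "(\<lambda>y. f (y j)) \<in> borel_measurable (PiM {..N} (\<lambda>_. borel))"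
  using measurable_compose[OF measurable_component_singleton[of j "{..N}" "\<lambda>_. borel"] assms(1)] assms(2)
  by simp

lemma Dp_meas:
  assumes a: "\<And>k. k < m \<Longrightarrow> a k \<in> borel_measurable borel" and c: "\<And>k. k \<le> m \<Longrightarrow> c k \<le> N"
  shows "(\<lambda>y. Dp m a (\<lambda>k. y (c k))) \<in> borel_measurable (PiM {..N} (\<lambda>_. borel))"
  unfolding Dp_def
proof (rule borel_measurable_prod)
  fix k assume "k \<in> {..<m}"
  then have k: "k < m" by simp
  show "(\<lambda>y. a k (y (c (Suc k))) - a k (y (c k))) \<in> borel_measurable (PiM {..N} (\<lambda>_. borel))"
    using coord_meas[OF a[OF k] c[of "Suc k"]] coord_meas[OF a[OF k] c[of k]] k
    by (intro borel_measurable_diff) auto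
qed

lemma Ec_meas:
  assumes "\<And>k. k < m \<Longrightarrow> a k \<in> borel_measurable borel" "\<And>k. k < m \<Longrightarrow> b k \<in> borel_measurable borel"
    and "\<And>k. k < m \<Longrightarrow> c k \<le> N"
  shows "(\<lambda>y. Ec m a b (\<lambda>k. y (c k))) \<in> borel_measurable (PiM {..N} (\<lambda>_. borel))"
  using assms
proof (induction m arbitrary: a b c)
  case 0
  then show ?case by simp
next
  case (Suc m)
  have c0: "c 0 \<le> N" using Suc.prems(3)[of 0] by simp
  have m1: "(\<lambda>y. a 0 (y (c 0)) - b 0 (y (c 0))) \<in> borel_measurable (PiM {..N} (\<lambda>_. borel))"
    using coord_meas[OF Suc.prems(1)[of 0] c0] coord_meas[OF Suc.prems(2)[of 0] c0]
    by (intro borel_measurable_diff) auto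
  have m2: "(\<lambda>y. Dp m (\<lambda>k. a (Suc k)) (\<lambda>k. y (c k))) \<in> borel_measurable (PiM {..N} (\<lambda>_. borel))"
    by (rule Dp_meas) (use Suc.prems in auto)
  show ?case
  proof (cases m)
    case 0
    then show ?thesis using m1 m2 by (simp add: borel_measurable_times)
  next
    case (Suc m')
    have c1: "c 1 \<le> N" using Suc.prems(3)[of 1] Suc by simp
    have m3: "(\<lambda>y. b 0 (y (c 1)) - b 0 (y (c 0))) \<in> borel_measurable (PiM {..N} (\<lambda>_. borel))"
      using coord_meas[OF Suc.prems(2)[of 0] c1] coord_meas[OF Suc.prems(2)[of 0] c0]
      by (intro borel_measurable_diff) auto
    have m4: "(\<lambda>y. Ec m (\<lambda>k. a (Suc k)) (\<lambda>k. b (Suc k)) (\<lambda>k. y (c (Suc k)))) \<in> borel_measurable (PiM {..N} (\<lambda>_. borel))"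
      using Suc.IH[of "\<lambda>k. a (Suc k)" "\<lambda>k. b (Suc k)" "\<lambda>k. c (Suc k)"] Suc.prems by simp
    have "(\<lambda>y. Ec (Suc m) a b (\<lambda>k. y (c k))) = (\<lambda>y. (a 0 (y (c 0)) - b 0 (y (c 0))) * Dp m (\<lambda>k. a (Suc k)) (\<lambda>k. y (c k))
       - (b 0 (y (c 1)) - b 0 (y (c 0))) * Ec m (\<lambda>k. a (Suc k)) (\<lambda>k. b (Suc k)) (\<lambda>k. y (c (Suc k))))"
      by (simp add: shift_def fun_eq_iff)
    then show ?thesis
      by (simp only:) (rule borel_measurable_diff[OF borel_measurable_times[OF m1 m2] borel_measurable_times[OF m3 m4]])
  qed
qed


lemma Dp_bound:
  assumes "\<And>k z. k < m \<Longrightarrow> norm (a k z) \<le> B"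
  shows "norm (Dp m a x) \<le> (2*B)^m"
proof -
  have "norm (Dp m a x) = (\<Prod>k<m. norm (a k (x (Suc k)) - a k (x k)))"
    unfolding Dp_def by (simp add: prod_norm)
  also have "\<dots> \<le> (\<Prod>k<m. 2*B)"
  proof (rule prod_mono)
    fix k assume "k \<in> {..<m}"
    then have "norm (a k (x (Suc k))) \<le> B" "norm (a k (x k)) \<le> B" using assms by auto
    then show "0 \<le> norm (a k (x (Suc k)) - a k (x k)) \<and> norm (a k (x (Suc k)) - a k (x k)) \<le> 2*B"
      using norm_triangle_ineq4[of "a k (x (Suc k))" "a k (x k)"] by simp
  qed
  finally show ?thesis by simp
qed

lemma Ec_bound:
  assumes "\<And>k z. k < m \<Longrightarrow> norm (a k z) \<le> B" "\<And>k z. k < m \<Longrightarrow> norm (b k z) \<le> B" "0 \<le> B"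
  shows "norm (Ec m a b x) \<le> real m * (2*B)^m"
  using assms
proof (induction m arbitrary: a b x)
  case 0
  then show ?case by simp
next
  case (Suc m)
  have "norm (a 0 (x 0)) \<le> B" "norm (b 0 (x 0)) \<le> B" "norm (b 0 (x 1)) \<le> B"
    using Suc.prems(1)[of 0 "x 0"] Suc.prems(2)[of 0 "x 0"] Suc.prems(2)[of 0 "x 1"] by auto
  then have 1: "norm (a 0 (x 0) - b 0 (x 0)) \<le> 2*B" and 2: "norm (b 0 (x 1) - b 0 (x 0)) \<le> 2*B"
    using norm_triangle_ineq4[of "a 0 (x 0)" "b 0 (x 0)"] norm_triangle_ineq4[of "b 0 (x 1)" "b 0 (x 0)"] by auto
  have 3: "norm (Dp m (\<lambda>k. a (Suc k)) x) \<le> (2*B)^m"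
    by (rule Dp_bound) (use Suc.prems in auto)
  have 4: "norm (Ec m (\<lambda>k. a (Suc k)) (\<lambda>k. b (Suc k)) (shift x)) \<le> real m * (2*B)^m"
    by (rule Suc.IH) (use Suc.prems in auto)
  have "norm (Ec (Suc m) a b x) \<le> norm (a 0 (x 0) - b 0 (x 0)) * norm (Dp m (\<lambda>k. a (Suc k)) x)
      + norm (b 0 (x 1) - b 0 (x 0)) * norm (Ec m (\<lambda>k. a (Suc k)) (\<lambda>k. b (Suc k)) (shift x))"
    by (simp del: Ec.simps(2) add: Ec.simps(2)[of m] norm_mult[symmetric])
       (rule order_trans[OF norm_triangle_ineq4], simp add: norm_mult)
  also have "\<dots> \<le> (2*B) * (2*B)^m + (2*B) * (real m * (2*B)^m)"
    using Suc.prems(3) by (intro add_mono mult_mono 1 2 3 4) auto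
  also have "\<dots> = real (Suc m) * (2*B)^(Suc m)" by (simp add: algebra_simps)
  finally show ?case .
qed


definition NC :: "('a \<Rightarrow> complex) \<Rightarrow> ('a \<Rightarrow> complex) \<Rightarrow> (nat \<Rightarrow> 'a) \<Rightarrow> nat \<Rightarrow> bool" where
  "NC f g y N \<longleftrightarrow> (\<exists>j\<le>N. \<exists>j'\<le>N. f (y j) \<noteq> f (y j')) \<or> (\<exists>j\<le>N. \<exists>j'\<le>N. g (y j) \<noteq> g (y j'))
     \<or> (\<exists>j\<le>N. f (y j) \<noteq> g (y j))"

lemma Dp_nz: "Dp m a x \<noteq> 0 \<Longrightarrow> k < m \<Longrightarrow> a k (x (Suc k)) \<noteq> a k (x k)"
  unfolding Dp_def by (auto simp: prod_zero_iff)

lemma nz_diff: "(u::complex) * v - w * z \<noteq> 0 \<Longrightarrow> (u \<noteq> 0 \<and> v \<noteq> 0) \<or> (w \<noteq> 0 \<and> z \<noteq> 0)"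
  by auto

lemma NC_I1: "j \<le> N \<Longrightarrow> j' \<le> N \<Longrightarrow> f (y j) \<noteq> f (y j') \<Longrightarrow> NC f g y N"
  unfolding NC_def by blast
lemma NC_I2: "j \<le> N \<Longrightarrow> j' \<le> N \<Longrightarrow> g (y j) \<noteq> g (y j') \<Longrightarrow> NC f g y N"
  unfolding NC_def by blast
lemma NC_I3: "j \<le> N \<Longrightarrow> f (y j) \<noteq> g (y j) \<Longrightarrow> NC f g y N"
  unfolding NC_def by blast

lemma NC_shift:
  assumes "NC f g (shift y) m" shows "NC f g y (Suc m)"
  using assms[unfolded NC_def shift_def]
proof (elim disjE exE conjE)
  fix j j' assume "j \<le> m" "j' \<le> m" "f (y (Suc j)) \<noteq> f (y (Suc j'))"
  then show "NC f g y (Suc m)" by (intro NC_I1[of "Suc j" _ "Suc j'"]) auto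
next
  fix j j' assume "j \<le> m" "j' \<le> m" "g (y (Suc j)) \<noteq> g (y (Suc j'))"
  then show "NC f g y (Suc m)" by (intro NC_I2[of "Suc j" _ "Suc j'"]) auto
next
  fix j assume "j \<le> m" "f (y (Suc j)) \<noteq> g (y (Suc j))"
  then show "NC f g y (Suc m)" by (intro NC_I3[of "Suc j"]) auto
qed

lemma Ec_nz: "Ec (Suc m) a b y \<noteq> 0 \<Longrightarrow> k \<le> m \<Longrightarrow> NC (a k) (b k) y m"
proof (induction m arbitrary: a b y k)
  case 0
  then have "a 0 (y 0) \<noteq> b 0 (y 0)" "k = 0" by (auto simp: Dp_def)
  then show ?case by (intro NC_I3[of 0]) auto
next
  case (Suc m)
  let ?a = "\<lambda>k. a (Suc k)" and ?b = "\<lambda>k. b (Suc k)"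
  from Suc.prems(1) have "((a 0 (y 0) - b 0 (y 0)) \<noteq> 0 \<and> Dp (Suc m) ?a y \<noteq> 0)
     \<or> ((b 0 (y 1) - b 0 (y 0)) \<noteq> 0 \<and> Ec (Suc m) ?a ?b (shift y) \<noteq> 0)"
    unfolding Ec.simps(2)[of "Suc m"] by (rule nz_diff)
  then show ?case
  proof
    assume h: "a 0 (y 0) - b 0 (y 0) \<noteq> 0 \<and> Dp (Suc m) ?a y \<noteq> 0"
    show ?thesis
    proof (cases k)
      case 0
      have "a k (y 0) \<noteq> b k (y 0)" using h 0 by auto
      then show ?thesis by (intro NC_I3[of 0]) auto
    next
      case (Suc k')
      then have "a k (y (Suc k')) \<noteq> a k (y k')" using Dp_nz[of "Suc m" ?a y k'] h Suc.prems(2) by auto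
      moreover have "Suc k' \<le> Suc m" "k' \<le> Suc m" using Suc Suc.prems(2) by auto
      ultimately show ?thesis by (intro NC_I1[of "Suc k'" _ k'])
    qed
  next
    assume h: "b 0 (y 1) - b 0 (y 0) \<noteq> 0 \<and> Ec (Suc m) ?a ?b (shift y) \<noteq> 0"
    show ?thesis
    proof (cases k)
      case 0
      have "b k (y 1) \<noteq> b k (y 0)" using h 0 by auto
      then show ?thesis by (intro NC_I2[of 1 _ 0]) auto
    next
      case (Suc k')
      then have "NC (?a k') (?b k') (shift y) m" using Suc.IH[of ?a ?b "shift y" k'] h Suc.prems(2) by auto
      then have "NC (a (Suc k')) (b (Suc k')) y (Suc m)" by (rule NC_shift)
      then show ?thesis using Suc by simp
    qed
  qed
qed

lemma witness_bounded:
  fixes chi :: "nat \<Rightarrow> 'a::metric_space \<Rightarrow> complex"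
  assumes hyp: "bounded (\<Inter>i\<in>{1..n}. thickening (supp (chi i)) R \<inter> thickening (supp (\<lambda>x. 1 - chi i x)) R)"
    and wit: "\<And>x l. x \<in> tuples N \<Longrightarrow> \<theta> x \<noteq> 0 \<Longrightarrow> l \<in> {1..n} \<Longrightarrow>
              \<exists>j\<le>N. \<exists>j'\<le>N. x j \<in> supp (chi l) \<and> x j' \<in> supp (\<lambda>z. 1 - chi l z)"
  shows "bounded_tuples N ({x \<in> tuples N. \<theta> x \<noteq> 0} \<inter> diag_thick N R)"
proof -
  let ?K = "\<Inter>i\<in>{1..n}. thickening (supp (chi i)) R \<inter> thickening (supp (\<lambda>x. 1 - chi i x)) R"
  obtain c0 r0 where cr: "\<And>p. p \<in> ?K \<Longrightarrow> dist c0 p \<le> r0" using hyp unfolding bounded_def by blast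
  show ?thesis unfolding bounded_tuples_def
  proof (intro exI ballI)
    fix x assume "x \<in> {x \<in> tuples N. \<theta> x \<noteq> 0} \<inter> diag_thick N R"
    then have xt: "x \<in> tuples N" and nz: "\<theta> x \<noteq> 0" and "x \<in> diag_thick N R" by auto
    then obtain p where p: "dist_max N x (\<lambda>_. p) \<le> R" unfolding diag_thick_def by auto
    have dj: "dist (x j) p \<le> R" if "j \<le> N" for j
    proof -
      have "dist (x j) p \<le> dist_max N x (\<lambda>_. p)" unfolding dist_max_def
        using that by (intro Max_ge) auto
      then show ?thesis using p by simp
    qed
    have pK: "p \<in> ?K"
    proof
      fix l assume l: "l \<in> {1..n}"
      obtain j j' where j: "j \<le> N" "j' \<le> N" "x j \<in> supp (chi l)" "x j' \<in> supp (\<lambda>z. 1 - chi l z)"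
        using wit[OF xt nz l] by blast
      have "infdist p (supp (chi l)) \<le> R"
        using infdist_le[OF j(3), of p] dj[OF j(1)] by (simp add: dist_commute)
      moreover have "infdist p (supp (\<lambda>z. 1 - chi l z)) \<le> R"
        using infdist_le[OF j(4), of p] dj[OF j(2)] by (simp add: dist_commute)
      ultimately show "p \<in> thickening (supp (chi l)) R \<inter> thickening (supp (\<lambda>x. 1 - chi l x)) R"
        unfolding thickening_def using j by auto
    qed
    show "dist_max N x (\<lambda>_. c0) \<le> R + r0" unfolding dist_max_def
    proof (subst Max_le_iff, simp, simp, intro ballI)
      fix d assume "d \<in> (\<lambda>i. dist (x i) c0) ` {..N}"
      then obtain i where i: "i \<le> N" "d = dist (x i) c0" by auto
      have "dist (x i) c0 \<le> dist (x i) p + dist p c0" by (rule dist_triangle)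
      also have "\<dots> \<le> R + r0" using dj[OF i(1)] cr[OF pK] by (simp add: dist_commute)
      finally show "d \<le> R + r0" using i by simp
    qed
  qed
qed

lemma switch_nc:
  fixes f :: "'a \<Rightarrow> complex"
  assumes "f u \<noteq> f v"
  shows "(u \<in> supp f \<and> v \<in> supp (\<lambda>z. 1 - f z)) \<or> (v \<in> supp f \<and> u \<in> supp (\<lambda>z. 1 - f z))"
  using assms unfolding supp_def by auto

lemma ind_nc:
  fixes f :: "'a \<Rightarrow> complex"
  assumes "indicator (supp f) u \<noteq> (indicator (supp f) v :: complex)"
  shows "(u \<in> supp f \<and> v \<in> supp (\<lambda>z. 1 - f z)) \<or> (v \<in> supp f \<and> u \<in> supp (\<lambda>z. 1 - f z))"
  using assms unfolding supp_def indicator_def by (auto split: if_splits)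

lemma mixed_nc:
  fixes f :: "'a \<Rightarrow> complex"
  assumes "f u \<noteq> indicator (supp f) u"
  shows "u \<in> supp f \<and> u \<in> supp (\<lambda>z. 1 - f z)"
  using assms unfolding supp_def indicator_def by (auto split: if_splits)



lemma ind_meas:
  fixes f :: "'a::topological_space \<Rightarrow> complex"
  assumes "f \<in> borel_measurable borel"
  shows "(indicator (supp f) :: 'a \<Rightarrow> complex) \<in> borel_measurable borel"
proof -
  have "supp f = f -` (- {0}) \<inter> space borel" by (auto simp: supp_def)
  also have "\<dots> \<in> sets borel"
    by (rule measurable_sets[OF assms borel_open[OF open_Compl[OF closed_singleton]]])
  finally show ?thesis by (rule borel_measurable_indicator)
qed

lemma sum_nz:
  assumes "(\<Sum>t\<in>S. f t) \<noteq> (0::complex)" shows "\<exists>t\<in>S. f t \<noteq> 0"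
proof (rule ccontr)
  assume "\<not> (\<exists>t\<in>S. f t \<noteq> 0)"
  then have "\<forall>t\<in>S. f t = 0" by blast
  then have "(\<Sum>t\<in>S. f t) = 0" by (rule sum.neutral)
  then show False using assms by simp
qed

lemma perm_hit:
  fixes n l :: nat
  assumes "\<tau> permutes {..<n}" "l \<in> {1..n}"
  obtains k where "k < n" "\<tau> k = l - 1"
proof -
  have "l - 1 \<in> {..<n}" using assms(2) by (cases l) auto
  then have "l - 1 \<in> \<tau> ` {..<n}" using permutes_image[OF assms(1)] by simp
  then show ?thesis using that by auto
qed

lemma perm_in:
  fixes n :: nat
  assumes "\<tau> permutes {..<n}" "k < n"
  shows "Suc (\<tau> k) \<in> {1..n}"
proof -
  have "\<tau> k \<in> {..<n}" using permutes_in_image[OF assms(1), of k] assms(2) by simp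
  then show ?thesis by simp
qed

lemma bounded_image_const: "(\<And>x. norm (f x) \<le> C) \<Longrightarrow> bounded (f ` S)"
  unfolding bounded_iff by (intro exI[of _ C]) auto

lemma sum_bound:
  assumes "finite S" "\<And>t x. t \<in> S \<Longrightarrow> norm (F t x) \<le> C"
  shows "norm (\<Sum>t\<in>S. of_int (sign (t::nat\<Rightarrow>nat)) * (F t x :: complex)) \<le> real (card S) * C"
proof -
  have "norm (\<Sum>t\<in>S. of_int (sign t) * F t x) \<le> (\<Sum>t\<in>S. norm (of_int (sign t) * F t x))"
    by (rule norm_sum)
  also have "\<dots> \<le> (\<Sum>t\<in>S. C)"
  proof (rule sum_mono)
    fix t assume "t \<in> S"
    have "norm (of_int (sign t) :: complex) = 1" by (simp add: sign_def)
    then show "norm (of_int (sign t) * F t x) \<le> C" using assms(2)[OF \<open>t \<in> S\<close>] by (simp add: norm_mult)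
  qed
  finally show ?thesis by simp
qed

lemma W_props:
  fixes chi h :: "nat \<Rightarrow> 'a::metric_space \<Rightarrow> complex"
  assumes hyp: "\<And>R. bounded (\<Inter>i\<in>{1..n}. thickening (supp (chi i)) R \<inter> thickening (supp (\<lambda>x. 1 - chi i x)) R)"
    and meas: "\<And>i. i \<in> {1..n} \<Longrightarrow> h i \<in> borel_measurable borel"
    and bnd: "\<And>i z. i \<in> {1..n} \<Longrightarrow> norm (h i z) \<le> B"
    and nc: "\<And>i u v. i \<in> {1..n} \<Longrightarrow> h i u \<noteq> h i v \<Longrightarrow>
       (u \<in> supp (chi i) \<and> v \<in> supp (\<lambda>z. 1 - chi i z)) \<or> (v \<in> supp (chi i) \<and> u \<in> supp (\<lambda>z. 1 - chi i z))"
  shows "coarse_cocycle n (wedge n (one_then h))"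
proof -
  let ?S = "{\<tau>. \<tau> permutes {..<n}}"
  have fin: "finite ?S" by (rule finite_permutations) simp
  have W: "wedge n (one_then h) = (\<lambda>x. \<Sum>\<tau>\<in>?S. of_int (sign \<tau>) * Dp n (\<lambda>k. h (Suc (\<tau> k))) x)"
    using wedge_Dp by (auto simp: fun_eq_iff)
  have m: "wedge n (one_then h) \<in> borel_measurable (PiM {..n} (\<lambda>_. borel))"
    unfolding W
  proof (intro borel_measurable_sum borel_measurable_times borel_measurable_const)
    fix \<tau> assume "\<tau> \<in> ?S"
    then have t: "\<tau> permutes {..<n}" by simp
    show "(\<lambda>x. Dp n (\<lambda>k. h (Suc (\<tau> k))) x) \<in> borel_measurable (PiM {..n} (\<lambda>_. borel))"
      using Dp_meas[of n "\<lambda>k. h (Suc (\<tau> k))" "\<lambda>k. k" n] meas perm_in[OF t] by simp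
  qed
  have b: "norm (wedge n (one_then h) x) \<le> real (card ?S) * (2*B)^n" for x
    unfolding W
  proof (rule sum_bound[OF fin, of "\<lambda>\<tau> x. Dp n (\<lambda>k. h (Suc (\<tau> k))) x"])
    fix \<tau> x assume "\<tau> \<in> ?S"
    then have t: "\<tau> permutes {..<n}" by simp
    show "norm (Dp n (\<lambda>k. h (Suc (\<tau> k))) x) \<le> (2*B)^n"
      by (rule Dp_bound) (use bnd perm_in[OF t] in auto)
  qed
  have s: "bounded_tuples n ({x \<in> tuples n. wedge n (one_then h) x \<noteq> 0} \<inter> diag_thick n R)" for R
  proof (rule witness_bounded[OF hyp])
    fix x l assume x: "x \<in> tuples n" and nz: "wedge n (one_then h) x \<noteq> 0" and l: "l \<in> {1..n}"
    obtain \<tau> where t: "\<tau> permutes {..<n}" and d: "Dp n (\<lambda>k. h (Suc (\<tau> k))) x \<noteq> 0"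
      using sum_nz[OF nz[unfolded W]] by auto
    obtain k where k: "k < n" "\<tau> k = l - 1" using perm_hit[OF t l] .
    have "h l (x (Suc k)) \<noteq> h l (x k)" using Dp_nz[OF d k(1)] k l by simp
    show "\<exists>j\<le>n. \<exists>j'\<le>n. x j \<in> supp (chi l) \<and> x j' \<in> supp (\<lambda>z. 1 - chi l z)"
    proof -
      have "Suc k \<le> n" "k \<le> n" using k(1) by auto
      then show ?thesis using nc[OF l \<open>h l (x (Suc k)) \<noteq> h l (x k)\<close>] by blast
    qed
  qed
  have c: "coboundary n (wedge n (one_then h)) x = 0" for x
  proof -
    have "coboundary n (wedge n (one_then h)) x = (\<Sum>\<tau>\<in>?S. of_int (sign \<tau>) * coboundary n (Dp n (\<lambda>k. h (Suc (\<tau> k)))) x)"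
      unfolding W by (rule cob_sum)
    also have "\<dots> = 0" by (simp only: Dp_cocycle mult_zero_right sum.neutral_const)
    finally show ?thesis .
  qed
  have lb: "locally_bounded_on_tuples n (wedge n (one_then h))"
    unfolding locally_bounded_on_tuples_def
  proof (intro ballI exI[of _ "1::real"] conjI)
    show "bounded (wedge n (one_then h) ` {y \<in> tuples n. dist_max n x y < 1})" for x
      by (rule bounded_image_const[OF b])
  qed simp
  have cc: "coarse_cochain n (wedge n (one_then h))"
    unfolding coarse_cochain_def using m lb s by (intro conjI allI)
  show ?thesis unfolding coarse_cocycle_def using cc c by (intro conjI ballI)
qed


theorem lemma5p3:
  fixes chi :: "nat \<Rightarrow> 'a::heine_borel \<Rightarrow> complex" and n :: nat
  assumes "coarsely_transverse_switch n chi"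
  shows "coarse_cochain n (wedge n (one_then chi)) \<and>
         same_class n (wedge n (one_then chi))
                      (wedge n (one_then (\<lambda>i. indicator (supp (chi i)))))"
proof -
  define X where "X = (\<lambda>i. indicator (supp (chi i)) :: 'a \<Rightarrow> complex)"
  have meas: "\<And>i. i \<in> {1..n} \<Longrightarrow> chi i \<in> borel_measurable borel"
    and bnd: "\<And>i. i \<in> {1..n} \<Longrightarrow> bounded (range (chi i))"
    and hyp: "\<And>R. bounded (\<Inter>i\<in>{1..n}. thickening (supp (chi i)) R \<inter> thickening (supp (\<lambda>x. 1 - chi i x)) R)"
    using assms unfolding coarsely_transverse_switch_def by auto
  have measX: "\<And>i. i \<in> {1..n} \<Longrightarrow> X i \<in> borel_measurable borel"
    unfolding X_def by (rule ind_meas[OF meas])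
  have "bounded (\<Union>i\<in>{1..n}. range (chi i))" using bnd by (intro bounded_UN) auto
  then obtain B0 where B0: "\<And>z. z \<in> (\<Union>i\<in>{1..n}. range (chi i)) \<Longrightarrow> norm z \<le> B0"
    unfolding bounded_iff by blast
  define B where "B = max B0 1"
  have B: "0 \<le> B" "\<And>i z. i \<in> {1..n} \<Longrightarrow> norm (chi i z) \<le> B" "\<And>i z. norm (X i z) \<le> B"
  proof -
    show "0 \<le> B" unfolding B_def by simp
    show "norm (chi i z) \<le> B" if "i \<in> {1..n}" for i z
      using B0[of "chi i z"] that unfolding B_def by force
    show "norm (X i z) \<le> B" for i z
      unfolding B_def X_def indicator_def by (auto simp: le_max_iff_disj)
  qed
  have cocX: "coarse_cocycle n (wedge n (one_then X))"
  proof (rule W_props[OF hyp measX B(3)])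
    fix i u v assume "i \<in> {1..n}" and h: "X i u \<noteq> X i v"
    show "(u \<in> supp (chi i) \<and> v \<in> supp (\<lambda>z. 1 - chi i z)) \<or> (v \<in> supp (chi i) \<and> u \<in> supp (\<lambda>z. 1 - chi i z))"
      using h unfolding X_def by (rule ind_nc)
  qed
  have cocC: "coarse_cocycle n (wedge n (one_then chi))"
  proof (rule W_props[OF hyp meas B(2)])
    fix i u v assume "i \<in> {1..n}" and h: "chi i u \<noteq> chi i v"
    show "(u \<in> supp (chi i) \<and> v \<in> supp (\<lambda>z. 1 - chi i z)) \<or> (v \<in> supp (chi i) \<and> u \<in> supp (\<lambda>z. 1 - chi i z))"
      using h by (rule switch_nc)
  qed
  let ?S = "{\<tau>. \<tau> permutes {..<n}}"
  have fin: "finite ?S" by (rule finite_permutations) simp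
  have WC: "wedge n (one_then chi) = (\<lambda>x. \<Sum>\<tau>\<in>?S. of_int (sign \<tau>) * Dp n (\<lambda>k. chi (Suc (\<tau> k))) x)"
    using wedge_Dp by (auto simp: fun_eq_iff)
  have WX: "wedge n (one_then X) = (\<lambda>x. \<Sum>\<tau>\<in>?S. of_int (sign \<tau>) * Dp n (\<lambda>k. X (Suc (\<tau> k))) x)"
    using wedge_Dp by (auto simp: fun_eq_iff)
  have sc: "same_class n (wedge n (one_then chi)) (wedge n (one_then X))"
  proof (cases n)
    case 0
    have "wedge n (one_then chi) x = wedge n (one_then X) x" for x
      unfolding WC WX using 0 by (simp add: Dp_def)
    then show ?thesis using cocC cocX 0 unfolding same_class_def by simp
  next
    case (Suc m)
    define \<eta> where "\<eta> = (\<lambda>y. \<Sum>\<tau>\<in>?S. of_int (sign \<tau>) * Ec (Suc m) (\<lambda>k. chi (Suc (\<tau> k))) (\<lambda>k. X (Suc (\<tau> k))) y)"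
    have em: "\<eta> \<in> borel_measurable (PiM {..m} (\<lambda>_. borel))"
      unfolding \<eta>_def
    proof (intro borel_measurable_sum borel_measurable_times borel_measurable_const)
      fix \<tau> assume "\<tau> \<in> ?S"
      then have t: "\<tau> permutes {..<n}" by simp
      have "(\<lambda>y. Ec (Suc m) (\<lambda>k. chi (Suc (\<tau> k))) (\<lambda>k. X (Suc (\<tau> k))) (\<lambda>k. y k)) \<in> borel_measurable (PiM {..m} (\<lambda>_. borel))"
      proof (rule Ec_meas)
        fix k assume k: "k < Suc m"
        then have "Suc (\<tau> k) \<in> {1..n}" using perm_in[OF t] Suc by simp
        then show "chi (Suc (\<tau> k)) \<in> borel_measurable borel" "X (Suc (\<tau> k)) \<in> borel_measurable borel"
          using meas measX by blast+
        show "k \<le> m" using k by simp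
      qed
      then show "(\<lambda>y. Ec (Suc m) (\<lambda>k. chi (Suc (\<tau> k))) (\<lambda>k. X (Suc (\<tau> k))) y) \<in> borel_measurable (PiM {..m} (\<lambda>_. borel))"
        by simp
    qed
    have eb: "norm (\<eta> y) \<le> real (card ?S) * (real (Suc m) * (2*B)^(Suc m))" for y
      unfolding \<eta>_def
    proof (rule sum_bound[OF fin, of "\<lambda>\<tau> y. Ec (Suc m) (\<lambda>k. chi (Suc (\<tau> k))) (\<lambda>k. X (Suc (\<tau> k))) y"])
      fix \<tau> y assume "\<tau> \<in> ?S"
      then have t: "\<tau> permutes {..<n}" by simp
      show "norm (Ec (Suc m) (\<lambda>k. chi (Suc (\<tau> k))) (\<lambda>k. X (Suc (\<tau> k))) y) \<le> real (Suc m) * (2*B)^(Suc m)"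
      proof (rule Ec_bound)
        fix k z assume k: "k < Suc m"
        then have "Suc (\<tau> k) \<in> {1..n}" using perm_in[OF t] Suc by simp
        then show "norm (chi (Suc (\<tau> k)) z) \<le> B" by (rule B(2))
        show "norm (X (Suc (\<tau> k)) z) \<le> B" by (rule B(3))
      qed (rule B(1))
    qed
    have es: "bounded_tuples m ({x \<in> tuples m. \<eta> x \<noteq> 0} \<inter> diag_thick m R)" for R
    proof (rule witness_bounded[OF hyp])
      fix x l assume x: "x \<in> tuples m" and nz: "\<eta> x \<noteq> 0" and l: "l \<in> {1..n}"
      obtain \<tau> where t: "\<tau> permutes {..<n}" and d: "Ec (Suc m) (\<lambda>k. chi (Suc (\<tau> k))) (\<lambda>k. X (Suc (\<tau> k))) x \<noteq> 0"
        using sum_nz[OF nz[unfolded \<eta>_def]] by auto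
      obtain k where k: "k < n" "\<tau> k = l - 1" using perm_hit[OF t l] .
      have lk: "Suc (\<tau> k) = l" using k l by simp
      have "NC (chi l) (X l) x m" using Ec_nz[OF d, of k] k Suc lk by simp
      then show "\<exists>j\<le>m. \<exists>j'\<le>m. x j \<in> supp (chi l) \<and> x j' \<in> supp (\<lambda>z. 1 - chi l z)"
        unfolding NC_def
      proof (elim disjE exE conjE)
        fix j j' assume j: "j \<le> m" "j' \<le> m" "chi l (x j) \<noteq> chi l (x j')"
        from switch_nc[of "chi l", OF j(3)] show ?thesis using j(1,2) by blast
      next
        fix j j' assume j: "j \<le> m" "j' \<le> m" "X l (x j) \<noteq> X l (x j')"
        from ind_nc[of "chi l", OF j(3)[unfolded X_def]] show ?thesis using j(1,2) by blast
      next
        fix j assume j: "j \<le> m" "chi l (x j) \<noteq> X l (x j)"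
        from mixed_nc[of "chi l", OF j(2)[unfolded X_def]] show ?thesis using j(1) by blast
      qed
    qed
    have elb: "locally_bounded_on_tuples m \<eta>"
      unfolding locally_bounded_on_tuples_def
    proof (intro ballI exI[of _ "1::real"] conjI)
      show "bounded (\<eta> ` {y \<in> tuples m. dist_max m x y < 1})" for x
        by (rule bounded_image_const[OF eb])
    qed simp
    have ec: "coarse_cochain m \<eta>"
      unfolding coarse_cochain_def using em elb es by (intro conjI allI)
    have ecb: "wedge n (one_then chi) x - wedge n (one_then X) x = coboundary m \<eta> x" for x
    proof -
      have "coboundary m \<eta> x = (\<Sum>\<tau>\<in>?S. of_int (sign \<tau>) * coboundary m (Ec (Suc m) (\<lambda>k. chi (Suc (\<tau> k))) (\<lambda>k. X (Suc (\<tau> k)))) x)"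
        unfolding \<eta>_def by (rule cob_sum)
      also have "\<dots> = (\<Sum>\<tau>\<in>?S. of_int (sign \<tau>) * (Dp (Suc m) (\<lambda>k. chi (Suc (\<tau> k))) x - Dp (Suc m) (\<lambda>k. X (Suc (\<tau> k))) x))"
        by (simp only: telescope)
      also have "\<dots> = wedge n (one_then chi) x - wedge n (one_then X) x"
        unfolding WC WX by (simp add: Suc right_diff_distrib sum_subtractf)
      finally show ?thesis by simp
    qed
    show ?thesis unfolding same_class_def using cocC cocX ec ecb Suc by auto
  qed
  show ?thesis using cocC sc unfolding coarse_cocycle_def X_def by blast
qed

end
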